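(* If $L\subseteq\Sigma^*$ belongs to $Pol(\mathcal{C}om)(\Sigma)$, then $N^1(L)=O(\log n)$.
   Context: Non-deterministic communication complexity: for $f:X\times Y\to\{0,1\}$, $N^1(f)$ is the minimum cost of a non-deterministic protocol for $f$; equivalently, up to an additive constant 2, $N^1(f)=\log_2 C^1(f)$, where $C^1(f)$ is the minimum number of rectangles $S\times T\subseteq X\times Y$ on which $f\equiv1$ whose union is $f^{-1}(1)$. For a language $L\subseteq\Sigma^*$, $N^1(L)(n)$ is $N^1$ of the function in which Alice receives $a_1,a_3,\dots,a_{2n-1}$, Bob receives $a_2,a_4,\dots,a_{2n}$, each $a_i\in\Sigma\cup\{\epsilon\}$ ($\epsilon$ the empty word), and the value is $1$ iff $a_1a_2\cdots a_{2n}\in L$. $\mathcal{C}om(\Sigma)$ denotes the set of regular languages over $\Sigma$ whose syntactic monoid ($\Sigma^*/\equiv_L$, where $x\equiv_L y$ iff $uxv\in L\Leftrightarrow uyv\in L$ for all $u,v$) is commutative. $Pol(\mathcal{C}om)(\Sigma)$ is the set of finite unions of languages of the form $L_0a_1L_1a_2\cdots a_kL_k$ with $k\ge0$, $a_i\in\Sigma$ and $L_i\in\mathcal{C}om(\Sigma)$. Asymptotics are as $n\to\infty$. *)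

theory Defs
  imports Complex_Main "HOL-Library.Landau_Symbols"
begin

definition regular_lang :: "'a list set \<Rightarrow> bool" where
  "regular_lang L \<longleftrightarrow>
     (\<exists>(Q::nat set) q0 (\<delta>::nat \<Rightarrow> 'a \<Rightarrow> nat) F.
        finite Q \<and> q0 \<in> Q \<and> (\<forall>q\<in>Q. \<forall>a. \<delta> q a \<in> Q) \<and> F \<subseteq> Q \<and>
        L = {w. foldl \<delta> q0 w \<in> F})"

definition syn_cong :: "'a list set \<Rightarrow> 'a list \<Rightarrow> 'a list \<Rightarrow> bool" where
  "syn_cong L x y \<longleftrightarrow> (\<forall>u v. u @ x @ v \<in> L \<longleftrightarrow> u @ y @ v \<in> L)"

text \<open>The syntactic monoid is the quotient of the free monoid by syn_cong, with
  multiplication induced by concatenation; it is commutative iff xy and yx are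
  always congruent.\<close>
definition Com :: "'a list set set" where
  "Com = {L. regular_lang L \<and> (\<forall>x y. syn_cong L (x @ y) (y @ x))}"

definition conc :: "'a list set \<Rightarrow> 'a list set \<Rightarrow> 'a list set" where
  "conc A B = {u @ v | u v. u \<in> A \<and> v \<in> B}"

text \<open>monomial L0 [(a1,L1),...,(ak,Lk)] = L0 a1 L1 a2 ... ak Lk\<close>
fun monomial :: "'a list set \<Rightarrow> ('a \<times> 'a list set) list \<Rightarrow> 'a list set" where
  "monomial L0 [] = L0"
| "monomial L0 ((a, L1) # rest) = conc L0 (conc {[a]} (monomial L1 rest))"

definition PolCom :: "'a list set set" where
  "PolCom = {L. \<exists>ms :: ('a list set \<times> ('a \<times> 'a list set) list) list.
      (\<forall>(L0, ps) \<in> set ms. L0 \<in> Com \<and> (\<forall>(a, Li) \<in> set ps. Li \<in> Com)) \<and>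
      L = (\<Union>(L0, ps) \<in> set ms. monomial L0 ps)}"

definition C1 :: "'x set \<Rightarrow> 'y set \<Rightarrow> ('x \<Rightarrow> 'y \<Rightarrow> bool) \<Rightarrow> nat" where
  "C1 X Y f = (LEAST k. \<exists>R :: ('x set \<times> 'y set) list. length R = k \<and>
      (\<forall>(S, T) \<in> set R. S \<subseteq> X \<and> T \<subseteq> Y \<and> (\<forall>x\<in>S. \<forall>y\<in>T. f x y)) \<and>
      {(x, y). x \<in> X \<and> y \<in> Y \<and> f x y} = (\<Union>(S, T) \<in> set R. S \<times> T))"

definition N1 :: "'x set \<Rightarrow> 'y set \<Rightarrow> ('x \<Rightarrow> 'y \<Rightarrow> bool) \<Rightarrow> real" where
  "N1 X Y f = log 2 (real (C1 X Y f))"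

text \<open>Letters or the empty word: None stands for epsilon.\<close>
definition opt_word :: "'a option \<Rightarrow> 'a list" where
  "opt_word o' = (case o' of None \<Rightarrow> [] | Some a \<Rightarrow> [a])"

text \<open>Alice holds a1,a3,...,a(2n-1) (list xs), Bob holds a2,a4,...,a2n (list ys);
  the word is a1 a2 ... a2n.\<close>
definition interleave_word :: "'a option list \<Rightarrow> 'a option list \<Rightarrow> 'a list" where
  "interleave_word xs ys = concat (map (\<lambda>(a, b). opt_word a @ opt_word b) (zip xs ys))"

definition N1_lang :: "'a list set \<Rightarrow> nat \<Rightarrow> real" where
  "N1_lang L n = N1 {xs. length xs = n} {ys. length ys = n}
                    (\<lambda>xs ys. interleave_word xs ys \<in> L)"

end

theory Submission
  imports Defs "HOL-Library.Multiset" "HOL-Library.FuncSet"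
begin


lemma opt_word_simps[simp]: "opt_word None = []" "opt_word (Some a) = [a]"
  unfolding opt_word_def by simp_all

definition segw :: "(nat \<Rightarrow> 'a option) \<Rightarrow> nat \<Rightarrow> nat \<Rightarrow> 'a list" where
  "segw slot lo hi = concat (map (\<lambda>i. opt_word (slot i)) [lo..<hi])"

lemma flat_split:
  "concat (map opt_word s) = u @ a # v \<Longrightarrow>
   \<exists>t0 t1. s = t0 @ Some a # t1 \<and> concat (map opt_word t0) = u \<and> concat (map opt_word t1) = v"
proof (induction s arbitrary: u)
  case Nil then show ?case by simp
next
  case (Cons x s)
  show ?case
  proof (cases x)
    case None
    with Cons.prems have "concat (map opt_word s) = u @ a # v" by simp
    from Cons.IH[OF this] obtain t0 t1 where "s = t0 @ Some a # t1" "concat (map opt_word t0) = u"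
      "concat (map opt_word t1) = v" by blast
    with None show ?thesis
      by (intro exI[of _ "None # t0"] exI[of _ t1]) simp
  next
    case (Some b)
    show ?thesis
    proof (cases u)
      case Nil
      with Cons.prems Some show ?thesis
        by (intro exI[of _ "[]"] exI[of _ s]) simp
    next
      case (Cons b' u')
      with Cons.prems Some have "b' = b" "concat (map opt_word s) = u' @ a # v" by simp_all
      from Cons.IH[OF this(2)] obtain t0 t1 where "s = t0 @ Some a # t1" "concat (map opt_word t0) = u'"
        "concat (map opt_word t1) = v" by blast
      with Some Cons \<open>b' = b\<close> show ?thesis
        by (intro exI[of _ "Some b # t0"] exI[of _ t1]) simp
    qed
  qed
qed

lemma concI: "u \<in> A \<Longrightarrow> v \<in> B \<Longrightarrow> u @ v \<in> conc A B"
  unfolding conc_def by blast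

lemma upt_split3: assumes "lo \<le> q" "q < hi" shows "[lo..<hi] = [lo..<q] @ q # [Suc q..<hi]"
proof -
  have "[lo..<hi] = [lo..<q] @ [q..<hi]" using upt_add_eq_append[of lo q "hi - q"] assms by simp
  also have "[q..<hi] = q # [Suc q..<hi]" using upt_conv_Cons assms by simp
  finally show ?thesis .
qed

lemma segw_split:
  assumes "segw slot lo hi = u @ a # v"
  shows "\<exists>q. lo \<le> q \<and> q < hi \<and> slot q = Some a \<and> segw slot lo q = u \<and> segw slot (Suc q) hi = v"
proof -
  define s where "s = map slot [lo..<hi]"
  have "concat (map opt_word s) = u @ a # v" using assms by (simp add: segw_def s_def o_def)
  from flat_split[OF this] obtain t0 t1 where t: "s = t0 @ Some a # t1"
    "concat (map opt_word t0) = u" "concat (map opt_word t1) = v" by blast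
  define q where "q = lo + length t0"
  have "length s = hi - lo" by (simp add: s_def)
  moreover have "length s = length t0 + Suc (length t1)" unfolding t(1) by simp
  ultimately have len: "hi - lo = length t0 + Suc (length t1)" by simp
  hence q: "lo \<le> q" "q < hi" unfolding q_def by linarith+
  have "s ! length t0 = Some a" unfolding t(1) by simp
  moreover have "s ! length t0 = slot q" unfolding s_def q_def using len by simp
  ultimately have sq: "slot q = Some a" by simp
  have "t0 = take (length t0) s" unfolding t(1) by simp
  also have "\<dots> = map slot [lo..<q]" unfolding s_def q_def take_map using len by simp
  finally have t0: "t0 = map slot [lo..<q]" .
  have "t1 = drop (Suc (length t0)) s" unfolding t(1) by simp
  also have "\<dots> = map slot [Suc q..<hi]" unfolding s_def q_def drop_map by simp
  finally have t1: "t1 = map slot [Suc q..<hi]" .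
  show ?thesis using q sq t(2,3) unfolding t0 t1
    by (intro exI[of _ q]) (simp add: segw_def o_def)
qed

lemma segw_join: "lo \<le> q \<Longrightarrow> q < hi \<Longrightarrow> slot q = Some a \<Longrightarrow>
  segw slot lo hi = segw slot lo q @ a # segw slot (Suc q) hi"
  by (simp add: segw_def upt_split3[of lo q hi])

fun okm :: "(nat \<Rightarrow> 'a option) \<Rightarrow> 'a list set \<Rightarrow> ('a \<times> 'a list set) list \<Rightarrow> nat \<Rightarrow> nat \<Rightarrow> nat list \<Rightarrow> bool" where
  "okm slot L0 [] lo hi [] = (segw slot lo hi \<in> L0)"
| "okm slot L0 ((a, L1) # rest) lo hi (q # qs) =
     (lo \<le> q \<and> q < hi \<and> slot q = Some a \<and> segw slot lo q \<in> L0 \<and> okm slot L1 rest (Suc q) hi qs)"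
| "okm _ _ _ _ _ _ = False"

lemma mono_okm: "segw slot lo hi \<in> monomial L0 ps \<longleftrightarrow> (\<exists>qs. okm slot L0 ps lo hi qs)"
proof (induction ps arbitrary: L0 lo)
  case Nil
  show ?case
  proof
    assume "segw slot lo hi \<in> monomial L0 []" thus "\<exists>qs. okm slot L0 [] lo hi qs"
      by (intro exI[of _ "[]"]) simp
  next
    assume "\<exists>qs. okm slot L0 [] lo hi qs"
    then obtain qs where "okm slot L0 [] lo hi qs" by blast
    thus "segw slot lo hi \<in> monomial L0 []" by (cases qs) auto
  qed
next
  case (Cons p rest)
  obtain a L1 where p: "p = (a, L1)" by fastforce
  show ?case
  proof
    assume "segw slot lo hi \<in> monomial L0 (p # rest)"
    then obtain u v where uv: "segw slot lo hi = u @ a # v" "u \<in> L0" "v \<in> monomial L1 rest"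
      by (auto simp: p conc_def)
    from segw_split[OF uv(1)] obtain q where q: "lo \<le> q" "q < hi" "slot q = Some a"
      "segw slot lo q = u" "segw slot (Suc q) hi = v" by blast
    from Cons.IH[of "Suc q" L1] uv(3) q(5) obtain qs where "okm slot L1 rest (Suc q) hi qs" by blast
    thus "\<exists>qs. okm slot L0 (p # rest) lo hi qs" using q uv(2)
      by (intro exI[of _ "q # qs"]) (simp add: p)
  next
    assume "\<exists>qs. okm slot L0 (p # rest) lo hi qs"
    then obtain qs where h: "okm slot L0 (p # rest) lo hi qs" by blast
    then obtain q qs' where qs: "qs = q # qs'" by (cases qs) (auto simp: p)
    from h have q: "lo \<le> q" "q < hi" "slot q = Some a" "segw slot lo q \<in> L0"
      "okm slot L1 rest (Suc q) hi qs'" by (auto simp: p qs)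
    from Cons.IH[of "Suc q" L1] q(5) have "segw slot (Suc q) hi \<in> monomial L1 rest" by blast
    hence "[a] @ segw slot (Suc q) hi \<in> conc {[a]} (monomial L1 rest)"
      by (rule concI[OF singletonI])
    hence "segw slot lo q @ ([a] @ segw slot (Suc q) hi) \<in> conc L0 (conc {[a]} (monomial L1 rest))"
      by (rule concI[OF q(4)])
    moreover have "monomial L0 (p # rest) = conc L0 (conc {[a]} (monomial L1 rest))"
      unfolding p by (rule monomial.simps(2))
    ultimately have "segw slot lo q @ a # segw slot (Suc q) hi \<in> monomial L0 (p # rest)"
      by (metis append_Cons append_Nil)
    thus "segw slot lo hi \<in> monomial L0 (p # rest)"
      unfolding segw_join[of lo q hi slot a, OF q(1-3)] .
  qed
qed



lemma com_perm:
  assumes com: "\<forall>x y. syn_cong L (x @ y) (y @ x)"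
  shows "mset u = mset v \<Longrightarrow> (pre @ u @ suf \<in> L \<longleftrightarrow> pre @ v @ suf \<in> L)"
proof (induction u arbitrary: v pre)
  case Nil then show ?case by simp
next
  case (Cons a u)
  have "a \<in> set v" using Cons.prems by (metis list.set_intros(1) set_mset_mset)
  then obtain v1 v2 where v: "v = v1 @ a # v2" by (meson split_list)
  have m: "mset u = mset (v1 @ v2)" using Cons.prems unfolding v by simp
  have "pre @ (a # u) @ suf \<in> L \<longleftrightarrow> (pre @ [a]) @ u @ suf \<in> L" by simp
  also have "\<dots> \<longleftrightarrow> (pre @ [a]) @ (v1 @ v2) @ suf \<in> L" by (rule Cons.IH[OF m])
  also have "\<dots> \<longleftrightarrow> pre @ ([a] @ v1) @ (v2 @ suf) \<in> L" by simp
  also have "\<dots> \<longleftrightarrow> pre @ (v1 @ [a]) @ (v2 @ suf) \<in> L"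
    using com unfolding syn_cong_def by blast
  also have "\<dots> \<longleftrightarrow> pre @ v @ suf \<in> L" unfolding v by simp
  finally show ?case .
qed

lemma com_mem_mset:
  assumes "L \<in> Com"
  shows "w \<in> L \<longleftrightarrow> mset w \<in> mset ` L"
proof
  assume "mset w \<in> mset ` L"
  then obtain w' where "w' \<in> L" "mset w' = mset w" by auto
  with com_perm[of L w' w "[]" "[]"] assms show "w \<in> L" by (simp add: Com_def)
qed auto

definition ma :: "(nat \<Rightarrow> 'a option) \<Rightarrow> nat \<Rightarrow> nat \<Rightarrow> 'a multiset" where
  "ma sa lo hi = (\<Sum>i\<in>{lo..<hi}. if even i then mset (opt_word (sa i)) else {#})"

definition mb :: "(nat \<Rightarrow> 'a option) \<Rightarrow> nat \<Rightarrow> nat \<Rightarrow> 'a multiset" where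
  "mb sb lo hi = (\<Sum>i\<in>{lo..<hi}. if odd i then mset (opt_word (sb i)) else {#})"

definition slot2 :: "(nat \<Rightarrow> 'a option) \<Rightarrow> (nat \<Rightarrow> 'a option) \<Rightarrow> nat \<Rightarrow> 'a option" where
  "slot2 sa sb i = (if even i then sa i else sb i)"

lemma mset_segw: "mset (segw (slot2 sa sb) lo hi) = ma sa lo hi + mb sb lo hi"
proof -
  have "mset (segw (slot2 sa sb) lo hi) = (\<Sum>i\<in>{lo..<hi}. mset (opt_word (slot2 sa sb i)))"
    unfolding segw_def mset_concat
    by (simp add: sum_set_upt_conv_sum_list_nat[symmetric] o_def)
  also have "\<dots> = (\<Sum>i\<in>{lo..<hi}. (if even i then mset (opt_word (sa i)) else {#})
     + (if odd i then mset (opt_word (sb i)) else {#}))"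
    by (rule sum.cong) (auto simp: slot2_def)
  also have "\<dots> = ma sa lo hi + mb sb lo hi" unfolding ma_def mb_def by (rule sum.distrib)
  finally show ?thesis .
qed

lemma size_ma: "size (ma sa lo hi) \<le> hi - lo"
proof -
  have "size (ma sa lo hi) = (\<Sum>i\<in>{lo..<hi}. size (if even i then mset (opt_word (sa i)) else {#}))"
    unfolding ma_def by simp
  also have "\<dots> \<le> (\<Sum>i\<in>{lo..<hi}. (1::nat))"
    by (rule sum_mono) (auto simp: opt_word_def split: option.splits)
  finally show ?thesis by simp
qed

fun chkA :: "(nat \<Rightarrow> 'a option) \<Rightarrow> ('a \<times> 'a list set) list \<Rightarrow> nat \<Rightarrow> nat \<Rightarrow> nat list \<Rightarrow> 'a multiset list \<Rightarrow> bool" where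
  "chkA sa [] lo hi [] [c] = (c = ma sa lo hi)"
| "chkA sa ((a, L1) # rest) lo hi (q # qs) (c # cs) =
     (lo \<le> q \<and> q < hi \<and> (even q \<longrightarrow> sa q = Some a) \<and> c = ma sa lo q \<and> chkA sa rest (Suc q) hi qs cs)"
| "chkA _ _ _ _ _ _ = False"

fun chkB :: "(nat \<Rightarrow> 'a option) \<Rightarrow> 'a list set \<Rightarrow> ('a \<times> 'a list set) list \<Rightarrow> nat \<Rightarrow> nat \<Rightarrow> nat list \<Rightarrow> 'a multiset list \<Rightarrow> bool" where
  "chkB sb L0 [] lo hi [] [c] = (c + mb sb lo hi \<in> mset ` L0)"
| "chkB sb L0 ((a, L1) # rest) lo hi (q # qs) (c # cs) =
     ((odd q \<longrightarrow> sb q = Some a) \<and> c + mb sb lo q \<in> mset ` L0 \<and> chkB sb L1 rest (Suc q) hi qs cs)"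
| "chkB _ _ _ _ _ _ _ = False"

lemma okm_chk:
  assumes "L0 \<in> Com" "\<forall>(a, Li) \<in> set ps. Li \<in> Com"
  shows "okm (slot2 sa sb) L0 ps lo hi qs \<longleftrightarrow> (\<exists>cs. chkA sa ps lo hi qs cs \<and> chkB sb L0 ps lo hi qs cs)"
  using assms
proof (induction ps arbitrary: L0 lo qs)
  case Nil
  have seg: "segw (slot2 sa sb) lo hi \<in> L0 \<longleftrightarrow> ma sa lo hi + mb sb lo hi \<in> mset ` L0"
    using com_mem_mset[OF Nil.prems(1)] mset_segw by metis
  show ?case
  proof (cases qs)
    case Nil
    show ?thesis
    proof
      assume "okm (slot2 sa sb) L0 [] lo hi qs"
      thus "\<exists>cs. chkA sa [] lo hi qs cs \<and> chkB sb L0 [] lo hi qs cs"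
        using seg Nil by (intro exI[of _ "[ma sa lo hi]"]) simp
    next
      assume "\<exists>cs. chkA sa [] lo hi qs cs \<and> chkB sb L0 [] lo hi qs cs"
      then obtain cs where h: "chkA sa [] lo hi qs cs" "chkB sb L0 [] lo hi qs cs" by blast
      then obtain c where cs: "cs = [c]" using Nil by (auto elim: chkA.elims)
      show "okm (slot2 sa sb) L0 [] lo hi qs" using h seg Nil unfolding cs by simp
    qed
  next
    case (Cons q qs')
    show ?thesis
    proof
      assume "okm (slot2 sa sb) L0 [] lo hi qs" thus "\<exists>cs. chkA sa [] lo hi qs cs \<and> chkB sb L0 [] lo hi qs cs"
        using Cons by simp
    next
      assume "\<exists>cs. chkA sa [] lo hi qs cs \<and> chkB sb L0 [] lo hi qs cs"
      then obtain cs where h: "chkA sa [] lo hi qs cs" by blast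
      thus "okm (slot2 sa sb) L0 [] lo hi qs" using Cons by (cases cs) auto
    qed
  qed
next
  case (Cons p rest)
  obtain a L1 where p: "p = (a, L1)" by fastforce
  have L1: "L1 \<in> Com" and rest: "\<forall>(a, Li) \<in> set rest. Li \<in> Com" using Cons.prems(2) by (auto simp: p)
  show ?case
  proof (cases qs)
    case Nil
    show ?thesis
    proof
      assume "okm (slot2 sa sb) L0 (p # rest) lo hi qs" thus "\<exists>cs. chkA sa (p # rest) lo hi qs cs \<and> chkB sb L0 (p # rest) lo hi qs cs"
        using Nil by (simp add: p)
    next
      assume "\<exists>cs. chkA sa (p # rest) lo hi qs cs \<and> chkB sb L0 (p # rest) lo hi qs cs"
      then obtain cs where h: "chkA sa (p # rest) lo hi qs cs" by blast
      thus "okm (slot2 sa sb) L0 (p # rest) lo hi qs" using Nil by (simp add: p)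
    qed
  next
    case (Cons q qs')
    have seg: "segw (slot2 sa sb) lo q \<in> L0 \<longleftrightarrow> ma sa lo q + mb sb lo q \<in> mset ` L0"
      using com_mem_mset[OF Cons.prems(1)] mset_segw by metis
    have sl: "slot2 sa sb q = Some a \<longleftrightarrow> (even q \<longrightarrow> sa q = Some a) \<and> (odd q \<longrightarrow> sb q = Some a)"
      by (simp add: slot2_def)
    note IH = Cons.IH[OF L1 rest, of "Suc q" qs']
    show ?thesis
    proof
      assume "okm (slot2 sa sb) L0 (p # rest) lo hi qs"
      hence o: "lo \<le> q" "q < hi" "slot2 sa sb q = Some a" "segw (slot2 sa sb) lo q \<in> L0"
        "okm (slot2 sa sb) L1 rest (Suc q) hi qs'" by (simp_all add: p Cons)
      from o(5) IH obtain cs where "chkA sa rest (Suc q) hi qs' cs" "chkB sb L1 rest (Suc q) hi qs' cs" by blast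
      thus "\<exists>cs. chkA sa (p # rest) lo hi qs cs \<and> chkB sb L0 (p # rest) lo hi qs cs"
        using o seg sl by (intro exI[of _ "ma sa lo q # cs"]) (simp add: p Cons)
    next
      assume "\<exists>cs. chkA sa (p # rest) lo hi qs cs \<and> chkB sb L0 (p # rest) lo hi qs cs"
      then obtain cs where h: "chkA sa (p # rest) lo hi qs cs" "chkB sb L0 (p # rest) lo hi qs cs" by blast
      then obtain c cs' where cs: "cs = c # cs'" by (cases cs) (auto simp: p Cons)
      from h have o: "lo \<le> q" "q < hi" "(even q \<longrightarrow> sa q = Some a)" "c = ma sa lo q"
        "chkA sa rest (Suc q) hi qs' cs'" "(odd q \<longrightarrow> sb q = Some a)" "c + mb sb lo q \<in> mset ` L0"
        "chkB sb L1 rest (Suc q) hi qs' cs'" by (simp_all add: p Cons cs)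
      from o(5,8) IH have "okm (slot2 sa sb) L1 rest (Suc q) hi qs'" by blast
      thus "okm (slot2 sa sb) L0 (p # rest) lo hi qs" using o seg sl by (simp add: p Cons)
    qed
  qed
qed

lemma chkA_bounds:
  "chkA sa ps lo hi qs cs \<Longrightarrow> hi \<le> H \<Longrightarrow>
    set qs \<subseteq> {..<H} \<and> length qs = length ps \<and> set cs \<subseteq> {M. size M \<le> H} \<and> length cs = Suc (length ps)"
proof (induction sa ps lo hi qs cs rule: chkA.induct)
  case (1 sa lo hi c)
  then show ?case using size_ma[of sa lo hi] by auto
next
  case (2 sa a L1 rest lo hi q qs c cs)
  then show ?case using size_ma[of sa lo q] by auto
qed auto



definition sl :: "'a option list \<Rightarrow> 'a option list \<Rightarrow> 'a option list" where
  "sl xs ys = concat (map (\<lambda>(a, b). [a, b]) (zip xs ys))"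

lemma interleave_sl: "interleave_word xs ys = concat (map opt_word (sl xs ys))"
proof (induction xs arbitrary: ys)
  case Nil then show ?case by (simp add: interleave_word_def sl_def)
next
  case (Cons x xs)
  then show ?case by (cases ys) (simp_all add: interleave_word_def sl_def)
qed

lemma length_sl: "length xs = length ys \<Longrightarrow> length (sl xs ys) = 2 * length xs"
proof (induction xs arbitrary: ys)
  case Nil then show ?case by (simp add: sl_def)
next
  case (Cons x xs)
  then show ?case by (cases ys) (simp_all add: sl_def)
qed

lemma nth_sl: "length xs = length ys \<Longrightarrow> p < 2 * length xs \<Longrightarrow>
  sl xs ys ! p = slot2 (\<lambda>i. xs ! (i div 2)) (\<lambda>i. ys ! (i div 2)) p"
proof (induction xs arbitrary: ys p)
  case Nil then show ?case by simp
next
  case (Cons x xs)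
  obtain y ys' where ys: "ys = y # ys'" using Cons.prems by (cases ys) auto
  have e: "sl (x # xs) (y # ys') = x # y # sl xs ys'" by (simp add: sl_def)
  show ?case
  proof (cases p)
    case 0 then show ?thesis by (simp add: e slot2_def ys)
  next
    case (Suc p1)
    show ?thesis
    proof (cases p1)
      case 0 then show ?thesis using Suc by (simp add: e slot2_def ys)
    next
      case (Suc p')
      have "length xs = length ys'" "p' < 2 * length xs" using Cons.prems \<open>p = Suc p1\<close> Suc ys by auto
      from Cons.IH[OF this] have "sl xs ys' ! p' = slot2 (\<lambda>i. xs ! (i div 2)) (\<lambda>i. ys' ! (i div 2)) p'" .
      moreover have "Suc (Suc p') div 2 = Suc (p' div 2)" by simp
      ultimately show ?thesis using \<open>p = Suc p1\<close> Suc by (simp add: e slot2_def ys)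
    qed
  qed
qed

lemma segw_cong: "(\<And>i. lo \<le> i \<Longrightarrow> i < hi \<Longrightarrow> f i = g i) \<Longrightarrow> segw f lo hi = segw g lo hi"
  unfolding segw_def by (intro arg_cong[where f=concat] map_cong) auto

lemma interleave_segw:
  assumes "length xs = n" "length ys = n"
  shows "interleave_word xs ys = segw (slot2 (\<lambda>i. xs ! (i div 2)) (\<lambda>i. ys ! (i div 2))) 0 (2 * n)"
proof -
  let ?s = "sl xs ys"
  have len: "length ?s = 2 * n" using length_sl assms by metis
  have "interleave_word xs ys = concat (map opt_word (map (\<lambda>i. ?s ! i) [0..<length ?s]))"
    by (simp add: interleave_sl map_nth)
  also have "\<dots> = segw (\<lambda>i. ?s ! i) 0 (2 * n)" unfolding segw_def len by (simp add: o_def)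
  also have "\<dots> = segw (slot2 (\<lambda>i. xs ! (i div 2)) (\<lambda>i. ys ! (i div 2))) 0 (2 * n)"
    by (rule segw_cong) (simp add: nth_sl assms)
  finally show ?thesis .
qed

lemma C1_le:
  assumes "finite G" "\<And>x y. x \<in> X \<Longrightarrow> y \<in> Y \<Longrightarrow> (f x y \<longleftrightarrow> (\<exists>g\<in>G. A g x \<and> B g y))"
  shows "C1 X Y f \<le> card G"
proof -
  obtain gl where gl: "set gl = G" "distinct gl" using finite_distinct_list[OF assms(1)] by blast
  define R where "R = map (\<lambda>g. ({x\<in>X. A g x}, {y\<in>Y. B g y})) gl"
  have "length R = card G" using gl distinct_card by (fastforce simp: R_def)
  moreover have "(\<forall>(S, T) \<in> set R. S \<subseteq> X \<and> T \<subseteq> Y \<and> (\<forall>x\<in>S. \<forall>y\<in>T. f x y))"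
    using assms(2) gl by (auto simp: R_def)
  moreover have "{(x, y). x \<in> X \<and> y \<in> Y \<and> f x y} = (\<Union>(S, T) \<in> set R. S \<times> T)"
    using assms(2) gl by (auto simp: R_def)
  ultimately show ?thesis unfolding C1_def by (intro Least_le) blast
qed

lemma msets_bounded:
  "finite {M :: 'a::finite multiset. size M \<le> h} \<and> card {M :: 'a::finite multiset. size M \<le> h} \<le> (h + 1) ^ card (UNIV :: 'a set)"
proof -
  let ?S = "{M :: 'a multiset. size M \<le> h}"
  let ?P = "PiE (UNIV :: 'a set) (\<lambda>_. {0..h})"
  have inj: "inj_on count ?S" by (meson count_inject inj_onI)
  have sub: "count ` ?S \<subseteq> ?P"
    using count_le_size order.trans by (fastforce simp: PiE_UNIV_domain)
  have fin: "finite ?P" by (intro finite_PiE) auto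
  have "finite ?S" using finite_imageD[OF finite_subset[OF sub fin] inj] .
  moreover have "card ?S \<le> card ?P"
    using card_inj_on_le[OF inj sub fin] .
  moreover have "card ?P = (h + 1) ^ card (UNIV :: 'a set)" by (simp add: card_PiE)
  ultimately show ?thesis by simp
qed



lemma C1_poly:
  fixes L :: "'a::finite list set"
  assumes "L \<in> PolCom"
  shows "\<exists>K D. \<forall>n. C1 {xs. length xs = n} {ys. length ys = n} (\<lambda>xs ys. interleave_word xs ys \<in> L)
                \<le> K * (2 * n + 1) ^ D"
proof -
  from assms obtain ms :: "('a list set \<times> ('a \<times> 'a list set) list) list" where
    msc: "\<forall>(L0, ps) \<in> set ms. L0 \<in> Com \<and> (\<forall>(a, Li) \<in> set ps. Li \<in> Com)" and
    Ldef: "L = (\<Union>(L0, ps) \<in> set ms. monomial L0 ps)"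
    unfolding PolCom_def by blast
  define CA where "CA = card (UNIV :: 'a set)"
  define D where "D = (\<Sum>m\<in>set ms. length (snd m) + CA * Suc (length (snd m)))"
  define K where "K = card (set ms)"
  have "C1 {xs. length xs = n} {ys. length ys = n} (\<lambda>xs ys. interleave_word xs ys \<in> L)
                \<le> K * (2 * n + 1) ^ D" for n
  proof -
    define H where "H = 2 * n"
    define MS where "MS = {M :: 'a multiset. size M \<le> H}"
    define QS where "QS = (\<lambda>k. {qs. set qs \<subseteq> {..<H} \<and> length qs = k})"
    define CS where "CS = (\<lambda>k. {cs. set cs \<subseteq> MS \<and> length cs = Suc k})"
    define G where "G = Sigma (set ms) (\<lambda>m. QS (length (snd m)) \<times> CS (length (snd m)))"
    have finMS: "finite MS" and cardMS: "card MS \<le> (H + 1) ^ CA"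
      using msets_bounded[of H] unfolding MS_def CA_def by auto
    have finQS: "finite (QS k)" for k unfolding QS_def by (rule finite_lists_length_eq) simp
    have finCS: "finite (CS k)" for k unfolding CS_def by (rule finite_lists_length_eq[OF finMS])
    have finG: "finite G" unfolding G_def using finQS finCS by auto
    define A where "A = (\<lambda>(g :: ('a list set \<times> ('a \<times> 'a list set) list) \<times> nat list \<times> 'a multiset list)
       (xs :: 'a option list). chkA (\<lambda>i. xs ! (i div 2)) (snd (fst g)) 0 H (fst (snd g)) (snd (snd g)))"
    define B where "B = (\<lambda>(g :: ('a list set \<times> ('a \<times> 'a list set) list) \<times> nat list \<times> 'a multiset list)
       (ys :: 'a option list). chkB (\<lambda>i. ys ! (i div 2)) (fst (fst g)) (snd (fst g)) 0 H (fst (snd g)) (snd (snd g)))"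
    have equiv: "interleave_word xs ys \<in> L \<longleftrightarrow> (\<exists>g\<in>G. A g xs \<and> B g ys)"
      if xs: "xs \<in> {xs. length xs = n}" and ys: "ys \<in> {ys. length ys = n}" for xs ys
    proof -
      define sa where "sa = (\<lambda>i. xs ! (i div 2))"
      define sb where "sb = (\<lambda>i. ys ! (i div 2))"
      have iw: "interleave_word xs ys = segw (slot2 sa sb) 0 H"
        using interleave_segw[of xs n ys] xs ys unfolding sa_def sb_def H_def by simp
      have "interleave_word xs ys \<in> L \<longleftrightarrow> (\<exists>m\<in>set ms. segw (slot2 sa sb) 0 H \<in> monomial (fst m) (snd m))"
        unfolding Ldef iw by force
      also have "\<dots> \<longleftrightarrow> (\<exists>m\<in>set ms. \<exists>qs cs. chkA sa (snd m) 0 H qs cs \<and> chkB sb (fst m) (snd m) 0 H qs cs)"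
      proof (intro bex_cong refl)
        fix m assume m: "m \<in> set ms"
        obtain L0 ps where mp: "m = (L0, ps)" by fastforce
        have c: "fst m \<in> Com" "\<forall>(a, Li) \<in> set (snd m). Li \<in> Com" using msc m unfolding mp by auto
        show "segw (slot2 sa sb) 0 H \<in> monomial (fst m) (snd m) \<longleftrightarrow>
              (\<exists>qs cs. chkA sa (snd m) 0 H qs cs \<and> chkB sb (fst m) (snd m) 0 H qs cs)"
          unfolding mono_okm using okm_chk[OF c, of sa sb 0 H] by blast
      qed
      also have "\<dots> \<longleftrightarrow> (\<exists>g\<in>G. A g xs \<and> B g ys)"
      proof
        assume "\<exists>m\<in>set ms. \<exists>qs cs. chkA sa (snd m) 0 H qs cs \<and> chkB sb (fst m) (snd m) 0 H qs cs"
        then obtain m qs cs where h: "m \<in> set ms" "chkA sa (snd m) 0 H qs cs" "chkB sb (fst m) (snd m) 0 H qs cs"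
          by blast
        from chkA_bounds[OF h(2), of H] have "(m, qs, cs) \<in> G"
          using h(1) unfolding G_def QS_def CS_def MS_def by auto
        thus "\<exists>g\<in>G. A g xs \<and> B g ys" using h unfolding A_def B_def sa_def sb_def by force
      next
        assume "\<exists>g\<in>G. A g xs \<and> B g ys"
        then obtain m qs cs where "(m, qs, cs) \<in> G" "A (m, qs, cs) xs" "B (m, qs, cs) ys" by auto
        thus "\<exists>m\<in>set ms. \<exists>qs cs. chkA sa (snd m) 0 H qs cs \<and> chkB sb (fst m) (snd m) 0 H qs cs"
          unfolding A_def B_def sa_def sb_def G_def by auto
      qed
      finally show ?thesis .
    qed
    have "C1 {xs. length xs = n} {ys. length ys = n} (\<lambda>xs ys. interleave_word xs ys \<in> L) \<le> card G"
      by (rule C1_le[OF finG]) (rule equiv)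
    also have "card G = (\<Sum>m\<in>set ms. card (QS (length (snd m))) * card (CS (length (snd m))))"
      unfolding G_def using finQS finCS by (simp add: card_cartesian_product)
    also have "\<dots> \<le> (\<Sum>m\<in>set ms. (H + 1) ^ D)"
    proof (rule sum_mono)
      fix m assume m: "m \<in> set ms"
      define k where "k = length (snd m)"
      have "card (QS k) = H ^ k" unfolding QS_def by (simp add: card_lists_length_eq)
      also have "\<dots> \<le> (H + 1) ^ k" by (rule power_mono) auto
      finally have q: "card (QS k) \<le> (H + 1) ^ k" .
      have "card (CS k) = card MS ^ Suc k" unfolding CS_def by (simp add: card_lists_length_eq finMS)
      also have "\<dots> \<le> ((H + 1) ^ CA) ^ Suc k" by (rule power_mono[OF cardMS]) simp
      also have "\<dots> = (H + 1) ^ (CA * Suc k)" by (simp only: power_mult mult.commute)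
      finally have c: "card (CS k) \<le> (H + 1) ^ (CA * Suc k)" .
      have "card (QS k) * card (CS k) \<le> (H + 1) ^ k * (H + 1) ^ (CA * Suc k)"
        by (rule mult_le_mono[OF q c])
      also have "\<dots> = (H + 1) ^ (k + CA * Suc k)" by (simp add: power_add)
      also have "\<dots> \<le> (H + 1) ^ D"
      proof (rule power_increasing)
        show "k + CA * Suc k \<le> D" unfolding D_def k_def
          using member_le_sum[OF m, of "\<lambda>m. length (snd m) + CA * Suc (length (snd m))"] by simp
      qed simp
      finally show "card (QS (length (snd m))) * card (CS (length (snd m))) \<le> (H + 1) ^ D"
        unfolding k_def .
    qed
    also have "\<dots> = K * (2 * n + 1) ^ D" by (simp add: K_def H_def)
    finally show ?thesis .
  qed
  thus ?thesis by blast
qed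



lemma log_bound:
  fixes C1v K D n :: nat
  assumes le: "C1v \<le> K * (2 * n + 1) ^ D" and n: "n \<ge> 3"
  shows "\<bar>log 2 (real C1v)\<bar> \<le> ((log 2 (max 1 (real K)) + 2 * real D) / ln 2) * \<bar>ln (real n)\<bar>"
proof -
  define c where "c = max 1 (real K)"
  have c1: "c \<ge> 1" unfolding c_def by simp
  have lc: "log 2 c \<ge> 0" using c1 by simp
  have rn: "real n \<ge> 3" using n by simp
  have lnn: "ln (real n) > 0" using rn by simp
  have l2n: "log 2 (real n) \<ge> 1" using rn by simp
  have rhs: "((log 2 c + 2 * real D) / ln 2) * \<bar>ln (real n)\<bar> = (log 2 c + 2 * real D) * log 2 (real n)"
    using lnn by (simp add: log_def)
  show ?thesis
  proof (cases "C1v = 0")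
    case True
    have "0 \<le> (log 2 c + 2 * real D) * log 2 (real n)" using lc l2n by simp
    moreover have "log 2 (0::real) = 0" by (simp add: log_def)
    ultimately show ?thesis using True rhs by (simp add: c_def)
  next
    case False
    hence pos: "real C1v \<ge> 1" by simp
    have "real C1v \<le> c * (2 * real n + 1) ^ D"
    proof -
      have "real C1v \<le> real (K * (2 * n + 1) ^ D)" using le by (simp only: of_nat_le_iff)
      also have "real (K * (2 * n + 1) ^ D) = real K * (2 * real n + 1) ^ D" by (simp add: add.commute)
      also have "\<dots> \<le> c * (2 * real n + 1) ^ D" unfolding c_def by (intro mult_right_mono) auto
      finally show ?thesis .
    qed
    hence "log 2 (real C1v) \<le> log 2 (c * (2 * real n + 1) ^ D)"
      using pos by (intro log_mono) auto
    also have "\<dots> = log 2 c + real D * log 2 (2 * real n + 1)"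
      using c1 by (simp add: log_mult log_nat_power)
    also have "\<dots> \<le> log 2 c + real D * log 2 (real n ^ 2)"
    proof -
      have "3 * real n \<le> real n * real n" using rn by (intro mult_right_mono) auto
      hence "2 * real n + 1 \<le> real n ^ 2" using rn unfolding power2_eq_square by linarith
      hence "log 2 (2 * real n + 1) \<le> log 2 (real n ^ 2)" by (intro log_mono) auto
      thus ?thesis by (intro add_left_mono mult_left_mono) auto
    qed
    also have "\<dots> = log 2 c + 2 * real D * log 2 (real n)"
      using rn by (simp add: log_nat_power)
    also have "\<dots> \<le> (log 2 c + 2 * real D) * log 2 (real n)"
    proof -
      have "log 2 c \<le> log 2 c * log 2 (real n)" using lc l2n by (simp add: mult_le_cancel_left1)
      thus ?thesis by (simp add: algebra_simps)
    qed
    finally have "log 2 (real C1v) \<le> (log 2 c + 2 * real D) * log 2 (real n)" .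
    moreover have "log 2 (real C1v) \<ge> 0" using pos by simp
    ultimately show ?thesis using rhs by (simp add: c_def)
  qed
qed

theorem mainTheorem8:
  fixes L :: "'a::finite list set"
  assumes "L \<in> PolCom"
  shows "N1_lang L \<in> O(\<lambda>n. ln (real n))"
proof -
  obtain K D where KD: "\<And>n. C1 {xs. length xs = n} {ys. length ys = n} (\<lambda>xs ys. interleave_word xs ys \<in> L)
                \<le> K * (2 * n + 1) ^ D" using C1_poly[OF assms] by blast
  show ?thesis
  proof (rule bigoI)
    show "\<forall>\<^sub>F n in at_top. norm (N1_lang L n) \<le> ((log 2 (max 1 (real K)) + 2 * real D) / ln 2) * norm (ln (real n))"
      unfolding eventually_at_top_linorder
    proof (intro exI allI impI)
      fix n :: nat assume "n \<ge> 3"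
      thus "norm (N1_lang L n) \<le> ((log 2 (max 1 (real K)) + 2 * real D) / ln 2) * norm (ln (real n))"
        using log_bound[OF KD] unfolding N1_lang_def N1_def real_norm_def by blast
    qed
  qed
qed

end
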